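(* Let $(X_n)_{n\ge0}$ be the Kendall random walk with step distribution $\nu\in\mathcal P_s$, $\nu(\{0\})=0$, let $a\ge0$ and $\tau^{-}_{a,w}=\min\{n\ge1:X_n\le a\}$. Then $$\mathbb P(\tau^-_{a,w}=n)=\begin{cases}F(a),& n=1,\\ \big(1-F(a)\big)\,2^{-(n-1)},& n\ge2,\end{cases}$$ i.e. for $n\ge2$, $\mathbb P(\tau^-_{a,w}=n)=(1-F(a))\,\mathbb P(\tau_0^+=n-1)$ where $\tau_0^+=\min\{n\ge1:X_n>0\}$ is geometric with $\mathbb P(\tau_0^+=k)=2^{-k}$.
   Context: Fix $\alpha>0$. $\mathcal P_s$ is the set of symmetric Borel probability measures on $\mathbb R$. For $x\in\mathbb R$, $\widetilde\delta_x=\frac12(\delta_x+\delta_{-x})$. For a probability measure $\lambda=\mathcal L(X)$ and $c>0$, $T_c\lambda=\mathcal L(cX)$, and $T_0\lambda=\delta_0$. $\widetilde\pi_{2\alpha}$ is the symmetric Pareto probability measure with density $\alpha|y|^{-2\alpha-1}\mathbf 1_{\{|y|\ge1\}}$. The Kendall convolution $\vartriangle_\alpha$ on $\mathcal P_s$ is defined by $\widetilde\delta_x\vartriangle_\alpha\widetilde\delta_y=T_M\big(\varrho^\alpha\widetilde\pi_{2\alpha}+(1-\varrho^\alpha)\widetilde\delta_1\big)$ where $M=\max(|x|,|y|)$, $m=\min(|x|,|y|)$, $\varrho=m/M$ (and $\varrho=0$ if $M=0$), extended by $(\nu_1\vartriangle_\alpha\nu_2)(A)=\int\int(\widetilde\delta_x\vartriangle_\alpha\widetilde\delta_y)(A)\,\nu_1(dx)\nu_2(dy)$.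 For $x\in\mathbb R$ and $\mu\in\mathcal P_s$ we write $\delta_x\vartriangle_\alpha\mu:=\widetilde\delta_x\vartriangle_\alpha\mu$. $F(t)=\nu((-\infty,t])$. The Kendall random walk with step distribution $\nu$ is the Markov chain $(X_n)_{n\ge0}$ with $X_0=0$ and transition kernel $\mathbb P(X_{k+1}\in A\mid X_k=x)=(\delta_x\vartriangle_\alpha\nu)(A)$. *)

theory Defs
  imports "HOL-Probability.Probability"
begin

definition sym_pareto :: "real \<Rightarrow> real measure" where
  "sym_pareto \<alpha> = density lborel
     (\<lambda>y. ennreal (\<alpha> * \<bar>y\<bar> powr (-2*\<alpha> - 1) * indicator {z. \<bar>z\<bar> \<ge> 1} y))"

text \<open>(sym_delta x kendall sym_delta y)(A)
  = T_M(rho^alpha pi_{2 alpha} + (1 - rho^alpha) sym_delta 1)(A), with T_0 = delta_0.\<close>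
definition kendall_pt :: "real \<Rightarrow> real \<Rightarrow> real \<Rightarrow> real set \<Rightarrow> real" where
  "kendall_pt \<alpha> x y A =
     (let M = max \<bar>x\<bar> \<bar>y\<bar>; m = min \<bar>x\<bar> \<bar>y\<bar>;
          \<rho> = (if M = 0 then 0 else m / M)
      in if M = 0 then indicator A 0
         else \<rho> powr \<alpha> * measure (sym_pareto \<alpha>) {z. M * z \<in> A}
              + (1 - \<rho> powr \<alpha>) * ((indicator A M + indicator A (-M)) / 2))"

definition kendall_conv :: "real \<Rightarrow> real measure \<Rightarrow> real measure \<Rightarrow> real set \<Rightarrow> real" where
  "kendall_conv \<alpha> \<mu>1 \<mu>2 A = (\<integral>x. (\<integral>y. kendall_pt \<alpha> x y A \<partial>\<mu>2) \<partial>\<mu>1)"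

text \<open>Transition kernel (delta_x kendall nu)(A) := (sym_delta x kendall nu)(A);
  integration against sym_delta x = (delta_x + delta_{-x})/2 written out.\<close>
definition kendall_kernel :: "real \<Rightarrow> real measure \<Rightarrow> real \<Rightarrow> real set \<Rightarrow> real" where
  "kendall_kernel \<alpha> \<nu> x A =
     ((\<integral>y. kendall_pt \<alpha> x y A \<partial>\<nu>) + (\<integral>y. kendall_pt \<alpha> (-x) y A \<partial>\<nu>)) / 2"

definition markov_chain_from_0 ::
  "'a measure \<Rightarrow> (nat \<Rightarrow> 'a \<Rightarrow> real) \<Rightarrow> (real \<Rightarrow> real set \<Rightarrow> real) \<Rightarrow> bool" where
  "markov_chain_from_0 M X K \<longleftrightarrow>
     prob_space M \<and>
     (\<forall>k. X k \<in> borel_measurable M) \<and>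
     (\<forall>\<omega>\<in>space M. X 0 \<omega> = 0) \<and>
     (\<forall>n (A :: nat \<Rightarrow> real set) B. (\<forall>k. A k \<in> sets borel) \<longrightarrow> B \<in> sets borel \<longrightarrow>
        measure M {\<omega>\<in>space M. (\<forall>k\<le>n. X k \<omega> \<in> A k) \<and> X (Suc n) \<omega> \<in> B}
        = (\<integral>\<omega>. indicator {\<omega>\<in>space M. \<forall>k\<le>n. X k \<omega> \<in> A k} \<omega> * K (X n \<omega>) B \<partial>M))"

definition first_time :: "(real \<Rightarrow> bool) \<Rightarrow> (nat \<Rightarrow> 'a \<Rightarrow> real) \<Rightarrow> 'a \<Rightarrow> enat" where
  "first_time P X \<omega> =
     (if \<exists>n\<ge>1. P (X n \<omega>) then enat (LEAST n. n \<ge> 1 \<and> P (X n \<omega>)) else \<infinity>)"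

end

theory Submission
  imports Defs "HOL-Analysis.Analysis"
begin


lemma pareto_half:
  fixes \<alpha> :: real assumes a: "\<alpha> > 0"
  shows "(\<integral>\<^sup>+y. ennreal (\<alpha> * y powr (-2*\<alpha>-1)) * indicator {1..} y \<partial>lborel) = ennreal (1/2)"
proof -
  have "(\<integral>\<^sup>+y. ennreal (\<alpha> * y powr (-2*\<alpha>-1)) * indicator {1..} y \<partial>lborel) = ennreal (0 - (- (1 powr (-2*\<alpha>)) / 2))"
  proof (rule nn_integral_FTC_atLeast)
    show "(\<lambda>y. \<alpha> * y powr (-2*\<alpha>-1)) \<in> borel_measurable borel" by measurable
    fix x :: real assume x: "1 \<le> x"
    show "0 \<le> \<alpha> * x powr (-2*\<alpha>-1)" using a by simp
    have "((\<lambda>y. - (y powr (-2*\<alpha>)) / 2) has_real_derivative (- ((-2*\<alpha>) * x powr (-2*\<alpha> - 1)) / 2)) (at x)"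
      using x by (auto intro!: derivative_eq_intros)
    then show "((\<lambda>y. - (y powr (-2*\<alpha>)) / 2) has_real_derivative \<alpha> * x powr (-2*\<alpha>-1)) (at x)"
      by simp
  next
    have lim: "((\<lambda>y. y powr (-2*\<alpha>)) \<longlongrightarrow> 0) at_top"
      using a by (intro tendsto_neg_powr filterlim_ident) auto
    show "((\<lambda>y. - (y powr (-2*\<alpha>)) / 2) \<longlongrightarrow> 0) at_top"
      using tendsto_divide[OF tendsto_minus[OF lim] tendsto_const[of 2]] by simp
  qed
  then show ?thesis by simp
qed


definition "pf \<alpha> y = \<alpha> * \<bar>y\<bar> powr (-2*\<alpha> - 1) * indicator {z::real. \<bar>z\<bar> \<ge> 1} y"

lemma pf_meas[measurable]: "(\<lambda>y. ennreal (pf \<alpha> y)) \<in> borel_measurable borel"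
  unfolding pf_def by measurable

lemma pareto_em: "A \<in> sets borel \<Longrightarrow> emeasure (sym_pareto \<alpha>) A = (\<integral>\<^sup>+y. ennreal (pf \<alpha> y) * indicator A y \<partial>lborel)"
  unfolding sym_pareto_def pf_def[symmetric]
  by (subst emeasure_density) (auto simp: pf_meas[unfolded pf_def])

lemma pareto_pos:
  fixes \<alpha> M c :: real assumes a: "\<alpha> > 0" and Mc: "M > c" "c \<ge> 0"
  shows "measure (sym_pareto \<alpha>) {z. c < M*z} = 1/2"
proof -
  have e: "ennreal (pf \<alpha> y) * indicator {z. c < M*z} y = ennreal (\<alpha> * y powr (-2*\<alpha>-1)) * indicator {1..} y" for y
  proof (cases "y \<ge> 1")
    case True then have "c < M*y" using Mc by (smt (verit) mult_le_cancel_left1)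
    then show ?thesis using True by (simp add: pf_def indicator_def)
  next
    case False
    have "\<not> (1 \<le> \<bar>y\<bar> \<and> c < M*y)"
    proof
      assume h: "1 \<le> \<bar>y\<bar> \<and> c < M*y"
      then have "y \<le> -1" using False by auto
      then have "M*y \<le> -M" using Mc by (smt (verit) mult_le_cancel_left1 mult_minus_right)
      then show False using h Mc by auto
    qed
    then show ?thesis using False by (auto simp: pf_def indicator_def)
  qed
  have "emeasure (sym_pareto \<alpha>) {z. c < M*z} = ennreal (1/2)"
  proof -
    have "emeasure (sym_pareto \<alpha>) {z. c < M*z} = (\<integral>\<^sup>+y. ennreal (pf \<alpha> y) * indicator {z. c < M*z} y \<partial>lborel)"
      by (rule pareto_em) measurable
    also have "\<dots> = (\<integral>\<^sup>+y. ennreal (\<alpha> * y powr (-2*\<alpha>-1)) * indicator {1..} y \<partial>lborel)"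
      by (simp only: e)
    finally show ?thesis using pareto_half[OF a] by simp
  qed
  then show ?thesis unfolding measure_def by (simp del: ennreal_half)
qed

lemma pareto_neg:
  fixes \<alpha> M c :: real assumes a: "\<alpha> > 0" and Mc: "M > c" "c \<ge> 0"
  shows "measure (sym_pareto \<alpha>) {z. M*z \<le> c} = 1/2"
proof -
  define g where "g y = ennreal (\<alpha> * y powr (-2*\<alpha>-1)) * indicator {1..} y" for y :: real
  have gm: "g \<in> borel_measurable borel" unfolding g_def by measurable
  have e: "ennreal (pf \<alpha> y) * indicator {z. M*z \<le> c} y = g (0 + (-1) * y)" for y
  proof (cases "y \<le> -1")
    case True then have "M*y \<le> c" using Mc by (smt (verit) mult_le_cancel_left1 mult_minus_right)
    then show ?thesis using True by (simp add: pf_def indicator_def g_def)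
  next
    case False
    have "\<not> (1 \<le> \<bar>y\<bar> \<and> M*y \<le> c)"
    proof
      assume h: "1 \<le> \<bar>y\<bar> \<and> M*y \<le> c"
      then have "y \<ge> 1" using False by auto
      then have "M*y \<ge> M" using Mc by (smt (verit) mult_le_cancel_left1)
      then show False using h Mc by linarith
    qed
    then show ?thesis using False by (auto simp: pf_def indicator_def g_def)
  qed
  have "(\<integral>\<^sup>+y. g y \<partial>lborel) = ennreal \<bar>-1\<bar> * (\<integral>\<^sup>+y. g (0 + (-1) * y) \<partial>lborel)"
    by (rule nn_integral_real_affine[OF gm]) simp
  then have "(\<integral>\<^sup>+y. g (0 + (-1) * y) \<partial>lborel) = ennreal (1/2)"
    using pareto_half[OF a] by (simp add: g_def)
  then have "emeasure (sym_pareto \<alpha>) {z. M*z \<le> c} = ennreal (1/2)"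
  proof -
    have "emeasure (sym_pareto \<alpha>) {z. M*z \<le> c} = (\<integral>\<^sup>+y. ennreal (pf \<alpha> y) * indicator {z. M*z \<le> c} y \<partial>lborel)"
      by (rule pareto_em) measurable
    also have "\<dots> = (\<integral>\<^sup>+y. g (0 + (-1) * y) \<partial>lborel)"
      by (simp only: e)
    finally show ?thesis using \<open>(\<integral>\<^sup>+y. g (0 + (-1) * y) \<partial>lborel) = ennreal (1/2)\<close> by simp
  qed
  then show ?thesis unfolding measure_def by (simp del: ennreal_half)
qed


lemma kpt_half:
  fixes \<alpha> c x y :: real assumes a: "\<alpha> > 0" and c: "c \<ge> 0" and x: "\<bar>x\<bar> > c"
    and B: "B = {..c} \<or> B = {c<..}"
  shows "kendall_pt \<alpha> x y B = 1/2"
proof -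
  define M where "M = max \<bar>x\<bar> \<bar>y\<bar>"
  define \<rho> where "\<rho> = min \<bar>x\<bar> \<bar>y\<bar> / M"
  have M: "M > c" "M \<noteq> 0" using x c by (auto simp: M_def)
  have P: "measure (sym_pareto \<alpha>) {z. M * z \<in> B} = 1/2"
    using B pareto_pos[OF a M(1) c] pareto_neg[OF a M(1) c] by auto
  have I: "(indicator B M + indicator B (-M)) / 2 = (1/2::real)"
    using B M c by (auto simp: indicator_def)
  have "kendall_pt \<alpha> x y B = \<rho> powr \<alpha> * measure (sym_pareto \<alpha>) {z. M * z \<in> B}
              + (1 - \<rho> powr \<alpha>) * ((indicator B M + indicator B (-M)) / 2)"
    unfolding kendall_pt_def Let_def M_def[symmetric] \<rho>_def using M by simp
  also have "\<dots> = 1/2" unfolding P I by (simp add: field_simps)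
  finally show ?thesis .
qed

lemma kker_half:
  fixes \<alpha> c x :: real assumes a: "\<alpha> > 0" and c: "c \<ge> 0" and x: "\<bar>x\<bar> > c"
    and B: "B = {..c} \<or> B = {c<..}" and nu: "prob_space \<nu>"
  shows "kendall_kernel \<alpha> \<nu> x B = 1/2"
proof -
  have e1: "\<And>y. kendall_pt \<alpha> x y B = 1/2" and e2: "\<And>y. kendall_pt \<alpha> (-x) y B = 1/2"
    using kpt_half[OF a c _ B] x by auto
  have sp: "measure \<nu> (space \<nu>) = 1" using prob_space.prob_space[OF nu] by simp
  show ?thesis unfolding kendall_kernel_def e1 e2 by (simp add: sp)
qed

lemma kker_zero:
  fixes \<alpha> :: real assumes nu: "prob_space \<nu>" "sets \<nu> = sets borel"
    and sym: "\<forall>A\<in>sets borel. measure \<nu> (uminus ` A) = measure \<nu> A"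
    and B: "B \<in> sets borel"
  shows "kendall_kernel \<alpha> \<nu> 0 B = measure \<nu> B"
proof -
  have pt: "kendall_pt \<alpha> 0 y B = (indicator B y + indicator (uminus ` B) y) / 2" for y
  proof -
    have u: "indicator (uminus ` B) y = (indicator B (-y) :: real)"
      by (auto simp: indicator_def image_iff) (metis minus_minus)+
    show ?thesis unfolding u
      by (cases "y = 0") (auto simp: kendall_pt_def Let_def indicator_def abs_if)
  qed
  have Bm: "uminus ` B \<in> sets borel"
  proof -
    have "uminus ` B = uminus -` B" by (auto simp: image_iff) (metis minus_minus)
    have um: "(uminus::real\<Rightarrow>real) \<in> borel \<rightarrow>\<^sub>M borel" by measurable
    show ?thesis using measurable_sets[OF um B] \<open>uminus ` B = uminus -` B\<close> by simp
  qed
  interpret prob_space \<nu> by (fact nu(1))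
  have "(\<integral>y. kendall_pt \<alpha> 0 y B \<partial>\<nu>) = (measure \<nu> B + measure \<nu> (uminus ` B)) / 2"
    unfolding pt using B Bm nu(2)
    by (subst integral_divide_zero, subst Bochner_Integration.integral_add) (auto intro!: integrable_real_indicator simp: less_top[symmetric])
  then have "(\<integral>y. kendall_pt \<alpha> 0 y B \<partial>\<nu>) = measure \<nu> B" using sym B by simp
  then show ?thesis unfolding kendall_kernel_def by simp
qed



lemma first_time_eq:
  assumes n: "n \<ge> 1"
  shows "first_time P X \<omega> = enat n \<longleftrightarrow> (\<forall>k. 1 \<le> k \<and> k < n \<longrightarrow> \<not> P (X k \<omega>)) \<and> P (X n \<omega>)"
proof
  assume h: "first_time P X \<omega> = enat n"
  then have ex: "\<exists>n\<ge>1. P (X n \<omega>)" by (auto simp: first_time_def split: if_splits)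
  then have L: "(LEAST n. n \<ge> 1 \<and> P (X n \<omega>)) = n" using h by (simp add: first_time_def)
  from ex have "(LEAST n. n \<ge> 1 \<and> P (X n \<omega>)) \<ge> 1 \<and> P (X (LEAST n. n \<ge> 1 \<and> P (X n \<omega>)) \<omega>)"
    by (rule LeastI_ex[where P="\<lambda>n. n \<ge> 1 \<and> P (X n \<omega>)"]) 
  moreover have "\<not> (k \<ge> 1 \<and> P (X k \<omega>))" if "k < n" for k
    using not_less_Least[of k "\<lambda>n. n \<ge> 1 \<and> P (X n \<omega>)"] L that by auto
  ultimately show "(\<forall>k. 1 \<le> k \<and> k < n \<longrightarrow> \<not> P (X k \<omega>)) \<and> P (X n \<omega>)" using L by auto
next
  assume h: "(\<forall>k. 1 \<le> k \<and> k < n \<longrightarrow> \<not> P (X k \<omega>)) \<and> P (X n \<omega>)"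
  then have "(LEAST n. n \<ge> 1 \<and> P (X n \<omega>)) = n"
    using n by (intro Least_equality) (auto simp: not_less[symmetric])
  then show "first_time P X \<omega> = enat n" using h n by (auto simp: first_time_def)
qed

lemma chain_lemma:
  assumes mc: "markov_chain_from_0 M X K" and S: "S \<in> sets borel"
    and K1: "\<And>x. x \<in> S \<Longrightarrow> K x S = 1/2" and K2: "\<And>x. x \<in> S \<Longrightarrow> K x (-S) = 1/2"
    and n: "n \<ge> 1"
  shows "measure M {\<omega>\<in>space M. (\<forall>k. 1 \<le> k \<and> k < n \<longrightarrow> X k \<omega> \<in> S) \<and> X n \<omega> \<notin> S}
        = (if n = 1 then K 0 (-S) else K 0 S / 2^(n-1))"
proof -
  have ps: "prob_space M" and Xm[measurable]: "\<And>k. X k \<in> borel_measurable M"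
    and X0: "\<And>\<omega>. \<omega> \<in> space M \<Longrightarrow> X 0 \<omega> = 0"
    and mk: "\<And>n A B. (\<forall>k. A k \<in> sets borel) \<Longrightarrow> B \<in> sets borel \<Longrightarrow>
        measure M {\<omega>\<in>space M. (\<forall>k\<le>n. X k \<omega> \<in> A k) \<and> X (Suc n) \<omega> \<in> B}
        = (\<integral>\<omega>. indicator {\<omega>\<in>space M. \<forall>k\<le>n. X k \<omega> \<in> A k} \<omega> * K (X n \<omega>) B \<partial>M)"
    using mc unfolding markov_chain_from_0_def by auto
  interpret prob_space M by (fact ps)
  define A where "A k = (if k = 0 then UNIV else S)" for k :: nat
  have Am: "\<forall>k. A k \<in> sets borel" using S by (auto simp: A_def)
  define G where "G m = {\<omega>\<in>space M. \<forall>k\<le>m. X k \<omega> \<in> A k}" for m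
  have Gm: "G m \<in> sets M" for m
  proof -
    have e: "G m = (\<Inter>k\<in>{..m}. X k -` A k \<inter> space M)" by (auto simp: G_def)
    have "X k -` A k \<inter> space M \<in> sets M" for k using Am by (auto intro: measurable_sets)
    then show ?thesis unfolding e by (intro sets.finite_INT) auto
  qed
  have step0: "measure M {\<omega>\<in>space M. (\<forall>k\<le>0. X k \<omega> \<in> A k) \<and> X (Suc 0) \<omega> \<in> B} = K 0 B"
    if B: "B \<in> sets borel" for B
  proof -
    have "(\<integral>\<omega>. indicator {\<omega>\<in>space M. \<forall>k\<le>0. X k \<omega> \<in> A k} \<omega> * K (X 0 \<omega>) B \<partial>M) = (\<integral>\<omega>. K 0 B \<partial>M)"
      by (rule Bochner_Integration.integral_cong) (auto simp: X0 A_def)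
    then show ?thesis using mk[OF Am B, of 0] prob_space by simp
  qed
  have stepm: "measure M {\<omega>\<in>space M. (\<forall>k\<le>m. X k \<omega> \<in> A k) \<and> X (Suc m) \<omega> \<in> B} = measure M (G m) / 2"
    if B: "B = S \<or> B = -S" and m: "m \<ge> 1" for B m
  proof -
    have Bs: "B \<in> sets borel" using B S by auto
    have "(\<integral>\<omega>. indicator {\<omega>\<in>space M. \<forall>k\<le>m. X k \<omega> \<in> A k} \<omega> * K (X m \<omega>) B \<partial>M)
        = (\<integral>\<omega>. indicator (G m) \<omega> * (1/2) \<partial>M)"
    proof (rule Bochner_Integration.integral_cong)
      fix \<omega> assume "\<omega> \<in> space M"
      show "indicator {\<omega>\<in>space M. \<forall>k\<le>m. X k \<omega> \<in> A k} \<omega> * K (X m \<omega>) B = indicator (G m) \<omega> * (1/2)"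
      proof (cases "\<omega> \<in> G m")
        case True
        then have "X m \<omega> \<in> S" using m by (auto simp: G_def A_def)
        then show ?thesis using True B K1 K2 by (auto simp: G_def)
      qed (auto simp: G_def)
    qed simp
    also have "\<dots> = measure M (G m) / 2" using Gm by simp
    finally show ?thesis using mk[OF Am Bs, of m] by simp
  qed
  have GS: "G (Suc m) = {\<omega>\<in>space M. (\<forall>k\<le>m. X k \<omega> \<in> A k) \<and> X (Suc m) \<omega> \<in> S}" for m
    by (auto simp: G_def A_def le_Suc_eq)
  have Gval: "measure M (G (Suc m)) = K 0 S / 2^m" for m
  proof (induction m)
    case 0 show ?case using step0[OF S] GS[of 0] by simp
  next
    case (Suc m)
    have "measure M (G (Suc (Suc m))) = measure M (G (Suc m)) / 2"
      using GS[of "Suc m"] stepm[of S "Suc m"] by simp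
    then show ?case using Suc by simp
  qed
  have T: "{\<omega>\<in>space M. (\<forall>k. 1 \<le> k \<and> k < n \<longrightarrow> X k \<omega> \<in> S) \<and> X n \<omega> \<notin> S}
       = {\<omega>\<in>space M. (\<forall>k\<le>n-1. X k \<omega> \<in> A k) \<and> X (Suc (n-1)) \<omega> \<in> -S}"
  proof -
    have sn: "Suc (n-1) = n" using n by simp
    have kk: "\<And>k. (k \<le> n-1) = (k < n)" using n by auto
    show ?thesis unfolding sn kk A_def by (auto simp: not_less_eq_eq[symmetric] Suc_le_eq)
  qed
  show ?thesis
  proof (cases "n = 1")
    case True then show ?thesis using T step0[of "-S"] S by auto
  next
    case False
    then obtain m where nm: "n = Suc (Suc m)" using n by (cases n; cases "n - 1") auto
    have "measure M {\<omega>\<in>space M. (\<forall>k\<le>Suc m. X k \<omega> \<in> A k) \<and> X (Suc (Suc m)) \<omega> \<in> -S} = measure M (G (Suc m)) / 2"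
      by (rule stepm) auto
    also have "\<dots> = K 0 S / 2^(Suc m)" using Gval[of m] by simp
    finally show ?thesis unfolding T using nm by simp
  qed
qed



theorem mainTheorem11:
  fixes \<alpha> a :: real and \<nu> :: "real measure"
    and M :: "'a measure" and X :: "nat \<Rightarrow> 'a \<Rightarrow> real"
  assumes "\<alpha> > 0"
    and "prob_space \<nu>" and "sets \<nu> = sets borel"
    and "\<forall>A\<in>sets borel. measure \<nu> (uminus ` A) = measure \<nu> A"
    and "measure \<nu> {0} = 0"
    and "a \<ge> 0"
    and "markov_chain_from_0 M X (kendall_kernel \<alpha> \<nu>)"
  shows "(\<forall>n\<ge>1. measure M {\<omega>\<in>space M. first_time (\<lambda>x. x \<le> a) X \<omega> = enat n}
            = (if n = 1 then measure \<nu> {..a}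
               else (1 - measure \<nu> {..a}) / 2 ^ (n - 1)))
         \<and> (\<forall>k\<ge>1. measure M {\<omega>\<in>space M. first_time (\<lambda>x. x > 0) X \<omega> = enat k} = 1 / 2 ^ k)
         \<and> (\<forall>n\<ge>2. measure M {\<omega>\<in>space M. first_time (\<lambda>x. x \<le> a) X \<omega> = enat n}
            = (1 - measure \<nu> {..a})
              * measure M {\<omega>\<in>space M. first_time (\<lambda>x. x > 0) X \<omega> = enat (n - 1)})"
proof -
  note a = assms(1) and nu = assms(2,3) and sym = assms(4) and z = assms(5) and a0 = assms(6)
    and mc = assms(7)
  interpret N: prob_space \<nu> by (fact nu(1))
  let ?K = "kendall_kernel \<alpha> \<nu>"
  have compl: "measure \<nu> {a<..} = 1 - measure \<nu> {..a}"
  proof -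
    have "{a<..} = space \<nu> - {..a}" using nu(2) by (auto simp: sets_eq_imp_space_eq[OF nu(2)])
    then show ?thesis using N.prob_compl[of "{..a}"] nu(2) by simp
  qed
  have pos: "measure \<nu> {0<..} = 1/2"
  proof -
    have u: "uminus ` {0<..} = {..<(0::real)}"
      by (auto simp: image_iff)
    have s1: "measure \<nu> {..<0} = measure \<nu> {0<..}" using sym u by (metis sets_lborel atLeast_borel greaterThan_borel)
    have s2: "measure \<nu> {..0} = measure \<nu> {..<0} + measure \<nu> {0}"
    proof -
      have "{..0::real} = {..<0} \<union> {0}" by auto
      moreover have "measure \<nu> ({..<0} \<union> {0}) = measure \<nu> {..<0} + measure \<nu> {0}"
        by (rule N.finite_measure_Union) (auto simp: nu(2))
      ultimately show ?thesis by simp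
    qed
    have "{0<..} = space \<nu> - {..(0::real)}" by (auto simp: sets_eq_imp_space_eq[OF nu(2)])
    then have s3: "measure \<nu> {0<..} = 1 - measure \<nu> {..0}" using N.prob_compl[of "{..0}"] nu(2) by simp
    show ?thesis using s1 s2 s3 z by simp
  qed
  have neg: "measure \<nu> {..0} = 1/2"
  proof -
    have "{0<..} = space \<nu> - {..(0::real)}" by (auto simp: sets_eq_imp_space_eq[OF nu(2)])
    then show ?thesis using N.prob_compl[of "{..0}"] nu(2) pos by simp
  qed
  have R1: "measure M {\<omega>\<in>space M. first_time (\<lambda>x. x \<le> a) X \<omega> = enat n}
            = (if n = 1 then measure \<nu> {..a} else (1 - measure \<nu> {..a}) / 2 ^ (n - 1))"
    if n: "n \<ge> 1" for n
  proof -
    have e: "{\<omega>\<in>space M. first_time (\<lambda>x. x \<le> a) X \<omega> = enat n}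
       = {\<omega>\<in>space M. (\<forall>k. 1 \<le> k \<and> k < n \<longrightarrow> X k \<omega> \<in> {a<..}) \<and> X n \<omega> \<notin> {a<..}}"
      by (auto simp: first_time_eq[OF n] not_le)
    have cS: "- {a<..} = {..a}" by auto
    have "measure M {\<omega>\<in>space M. (\<forall>k. 1 \<le> k \<and> k < n \<longrightarrow> X k \<omega> \<in> {a<..}) \<and> X n \<omega> \<notin> {a<..}}
        = (if n = 1 then ?K 0 (-{a<..}) else ?K 0 {a<..} / 2^(n-1))"
    proof (rule chain_lemma[OF mc _ _ _ n])
      have Ka: "?K x B = 1/2" if "a < x" "B = {..a} \<or> B = {a<..}" for x B
        using kker_half[OF a a0 _ that(2) nu(1)] that(1) a0 by auto
      fix x assume "x \<in> {a<..}"
      then show "?K x {a<..} = 1/2" "?K x (-{a<..}) = 1/2" unfolding cS using Ka by auto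
    qed simp
    then show ?thesis unfolding e cS
      using kker_zero[OF nu sym, of "{..a}" \<alpha>] kker_zero[OF nu sym, of "{a<..}" \<alpha>] compl by simp
  qed
  have R2: "measure M {\<omega>\<in>space M. first_time (\<lambda>x. x > 0) X \<omega> = enat k} = 1 / 2 ^ k"
    if k: "k \<ge> 1" for k
  proof -
    have e: "{\<omega>\<in>space M. first_time (\<lambda>x. x > 0) X \<omega> = enat k}
       = {\<omega>\<in>space M. (\<forall>j. 1 \<le> j \<and> j < k \<longrightarrow> X j \<omega> \<in> {..0}) \<and> X k \<omega> \<notin> {..0}}"
      by (auto simp: first_time_eq[OF k] not_le)
    have cS: "- {..0} = {0::real<..}" by auto
    have Kx: "?K x B = 1/2" if x: "x \<le> 0" and B: "B = {..0} \<or> B = {0<..}" for x B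
    proof (cases "x = 0")
      case True
      then show ?thesis using kker_zero[OF nu sym, of B \<alpha>] B pos neg by auto
    next
      case False
      then show ?thesis using kker_half[OF a order_refl _ B nu(1)] x by auto
    qed
    have "measure M {\<omega>\<in>space M. (\<forall>j. 1 \<le> j \<and> j < k \<longrightarrow> X j \<omega> \<in> {..0}) \<and> X k \<omega> \<notin> {..0}}
        = (if k = 1 then ?K 0 (-{..0}) else ?K 0 {..0} / 2^(k-1))"
    proof (rule chain_lemma[OF mc _ _ _ k])
      fix x :: real assume "x \<in> {..0}"
      then show "?K x {..0} = 1/2" "?K x (-{..0}) = 1/2" unfolding cS using Kx by auto
    qed simp
    then show ?thesis unfolding e cS using Kx[of 0] k
      by (cases "k = 1") (auto simp: power_Suc[symmetric])
  qed
  show ?thesis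
  proof (intro conjI allI impI)
    fix n :: nat assume "n \<ge> 1" then show "measure M {\<omega>\<in>space M. first_time (\<lambda>x. x \<le> a) X \<omega> = enat n}
            = (if n = 1 then measure \<nu> {..a} else (1 - measure \<nu> {..a}) / 2 ^ (n - 1))" by (rule R1)
  next
    fix k :: nat assume "k \<ge> 1" then show "measure M {\<omega>\<in>space M. first_time (\<lambda>x. x > 0) X \<omega> = enat k} = 1 / 2 ^ k" by (rule R2)
  next
    fix n :: nat assume n: "n \<ge> 2"
    then show "measure M {\<omega>\<in>space M. first_time (\<lambda>x. x \<le> a) X \<omega> = enat n}
            = (1 - measure \<nu> {..a}) * measure M {\<omega>\<in>space M. first_time (\<lambda>x. x > 0) X \<omega> = enat (n - 1)}"
      using R1[of n] R2[of "n-1"] by simp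
  qed
qed


end
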